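(* Let $q>9$ be an odd prime power which is a square, and let $a,b,c,d\in\mathbb{F}_q$ with $a\neq 0$. Put $\ell(x)=ax^{\sqrt{q}+1}+dx^{\sqrt{q}}+bx+c$. If there is a subset $D\subseteq\mathbb{F}_q$ with $|D|>q-\sqrt{q}/2+1/2$ such that $\ell(x)$ is a square in $\mathbb{F}_q$ (i.e. $\ell(x)=y^2$ for some $y\in\mathbb{F}_q$) for every $x\in D$, then $a^{\sqrt{q}}b=d^{\sqrt{q}}a$. *)

theory Defs
  imports Complex_Main "HOL-Computational_Algebra.Primes" "HOL-Library.Cardinality"
begin

end

theory Submission imports Defs "HOL-Number_Theory.Residues" "HOL-Computational_Algebra.Polynomial"
begin

lemma ff_prime_CHAR: "prime CHAR('a::{field,finite})"
  by (intro prime_CHAR_semidom finite_imp_CHAR_pos) auto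

lemma ff_power_card: "(x::'a::{field,finite}) ^ CARD('a) = x"
proof (cases "x = 0")
  case False
  have "x * (\<Prod>y\<in>UNIV-{0}. x * y) = x * x ^ (card (UNIV :: 'a set) - 1) * \<Prod>(UNIV-{0})"
    by (simp add: prod.distrib mult_ac)
  also have "x * x ^ (card (UNIV :: 'a set) - 1) = x ^ Suc (card (UNIV :: 'a set) - 1)"
    by (subst power_Suc) auto
  also have "Suc (card (UNIV :: 'a set) - 1) = card (UNIV :: 'a set)"
    using finite_UNIV_card_ge_0[where ?'a = 'a] by simp
  also have "(\<Prod>y\<in>UNIV-{0}. x * y) = (\<Prod>y\<in>UNIV-{0}. y)"
    by (rule prod.reindex_bij_witness[of _ "\<lambda>y. y / x" "\<lambda>y. x * y"]) (use False in auto)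
  finally show ?thesis
    by simp
qed (use finite_UNIV_card_ge_0[where ?'a = 'a] in auto)

lemma ff_power_card1: "(x::'a::{field,finite}) \<noteq> 0 \<Longrightarrow> x ^ (CARD('a) - 1) = 1"
proof -
  assume x: "x \<noteq> 0"
  have "x * x ^ (CARD('a) - 1) = x ^ CARD('a)"
    using finite_UNIV_card_ge_0[where ?'a = 'a] by (subst power_Suc[symmetric]) simp
  also have "\<dots> = x * 1" by (simp add: ff_power_card)
  finally show ?thesis using x by simp
qed

lemma ff_of_nat_card: "of_nat CARD('a) = (0::'a::{field,finite})"
  using CHAR_dvd_CARD[where 'a='a] of_nat_eq_0_iff_char_dvd by blast

lemma ff_sum_pow_small:
  assumes "0 < n" "n < CARD('a) - 1"
  shows "(\<Sum>x\<in>(UNIV::'a::{field,finite} set). x ^ n) = 0"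
proof -
  let ?p = "monom (1::'a) n - 1"
  have c1: "coeff ?p n = 1" using assms(1) by simp
  have "degree ?p \<le> n"
    by (rule order.trans[OF degree_diff_le]) (auto simp: degree_monom_le)
  then have deg: "degree ?p = n" using c1 by (metis antisym le_degree one_neq_zero)
  have "?p \<noteq> 0" using deg assms(1) by auto
  then have "card {x. poly ?p x = 0} \<le> n" using card_poly_roots_bound deg by metis
  moreover have "card (UNIV - {0::'a}) = CARD('a) - 1" by (simp add: card_Diff_singleton)
  ultimately have cc: "card {x. poly ?p x = 0} < card (UNIV - {0::'a})" using assms(2) by linarith
  have "\<not> (UNIV - {0::'a}) \<subseteq> {x. poly ?p x = 0}"
  proof
    assume "(UNIV - {0::'a}) \<subseteq> {x. poly ?p x = 0}"
    then have "card (UNIV - {0::'a}) \<le> card {x. poly ?p x = 0}"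
      by (intro card_mono poly_roots_finite \<open>?p \<noteq> 0\<close>)
    then show False using cc by linarith
  qed
  then obtain c :: 'a where c: "c \<noteq> 0" "c ^ n \<noteq> 1" by (auto simp: poly_monom)
  have "(\<Sum>x\<in>UNIV. x ^ n) = (\<Sum>x\<in>UNIV. (c * x) ^ n)"
    by (rule sum.reindex_bij_witness[of _ "\<lambda>y. c * y" "\<lambda>y. y / c"]) (use c in auto)
  also have "\<dots> = c ^ n * (\<Sum>x\<in>UNIV. x ^ n)" by (simp add: power_mult_distrib sum_distrib_left)
  finally have "(1 - c ^ n) * (\<Sum>x\<in>UNIV. x ^ n) = 0" by (simp add: algebra_simps)
  then show ?thesis using c by simp
qed

lemma ff_sum_pow:
  assumes "n < 2 * (CARD('a) - 1)" "CARD('a) > 2"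
  shows "(\<Sum>x\<in>(UNIV::'a::{field,finite} set). x ^ n) = (if n = CARD('a) - 1 then -1 else 0)"
proof -
  consider "n = 0" | "0 < n \<and> n < CARD('a) - 1" | "n = CARD('a) - 1" | "CARD('a) - 1 < n" by linarith
  then show ?thesis
  proof cases
    case 1 then show ?thesis using assms by (simp add: ff_of_nat_card)
  next
    case 2 then show ?thesis using ff_sum_pow_small[of n] by auto
  next
    case 3
    have "(\<Sum>x\<in>(UNIV::'a set). x ^ n) = (\<Sum>x\<in>(UNIV::'a set). if x = 0 then 0 else (1::'a))"
      apply (rule sum.cong[OF refl])
      subgoal for x using 3 assms ff_power_card1[of x] by (cases "x = 0") (auto simp: zero_power)
      done
    also have "\<dots> = of_nat (card (UNIV - {0::'a}))"
      by (simp add: sum.If_cases Collect_neg_eq Compl_eq_Diff_UNIV)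
    also have "\<dots> = of_nat CARD('a) - 1"
      by (simp add: card_Diff_singleton of_nat_diff)
    finally show ?thesis using 3 by (simp add: ff_of_nat_card)
  next
    case 4
    define n' where "n' = n - (CARD('a) - 1)"
    have n': "0 < n'" "n' < CARD('a) - 1" "n = n' + (CARD('a) - 1)" using 4 assms by (auto simp: n'_def)
    have "(\<Sum>x\<in>(UNIV::'a set). x ^ n) = (\<Sum>x\<in>UNIV. x ^ n')"
      apply (rule sum.cong[OF refl])
      subgoal for x
      proof -
        have "x ^ n = x ^ n' * x ^ (CARD('a) - 1)" unfolding n'(3) by (rule power_add)
        then show ?thesis using n' ff_power_card1[of x] by (cases "x = 0") (auto simp: zero_power)
      qed
      done
    also have "\<dots> = 0" using ff_sum_pow_small n' by blast
    finally show ?thesis using 4 by simp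
  qed
qed

lemma ff_sum_poly:
  fixes P :: "'a::{field,finite} poly"
  assumes "degree P < 2 * (CARD('a) - 1)" "CARD('a) > 2"
  shows "(\<Sum>x\<in>UNIV. poly P x) = - coeff P (CARD('a) - 1)"
proof -
  have "(\<Sum>x\<in>UNIV. poly P x) = (\<Sum>x\<in>UNIV. \<Sum>i\<le>degree P. coeff P i * x ^ i)"
    by (simp add: poly_altdef)
  also have "\<dots> = (\<Sum>i\<le>degree P. coeff P i * (\<Sum>x\<in>UNIV. x ^ i))"
    by (subst sum.swap) (simp add: sum_distrib_left)
  also have "\<dots> = (\<Sum>i\<le>degree P. if i = CARD('a) - 1 then - coeff P i else 0)"
    using assms by (intro sum.cong) (auto simp: ff_sum_pow)
  also have "\<dots> = - coeff P (CARD('a) - 1)"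
  proof (cases "CARD('a) - 1 \<le> degree P")
    case True then show ?thesis by (simp add: sum.delta)
  next
    case False then show ?thesis by (simp add: sum.delta coeff_eq_0)
  qed
  finally show ?thesis .
qed


lemma coeff_mult_nz:
  assumes "coeff (p * q) n \<noteq> 0"
  shows "\<exists>i\<le>n. coeff p i \<noteq> 0 \<and> coeff q (n - i) \<noteq> 0"
proof (rule ccontr)
  assume "\<not> ?thesis"
  then have "coeff (p*q) n = 0" unfolding coeff_mult by (intro sum.neutral) auto
  with assms show False by simp
qed

lemma coeff_lin_pow:
  fixes C e :: "'a::field"
  assumes "coeff ([:C, e:] ^ k) i \<noteq> 0" shows "i \<le> k"
proof -
  have "i \<le> degree ([:C, e:] ^ k)" using assms coeff_eq_0 not_le by blast
  also have "\<dots> \<le> degree [:C,e:] * k" by (rule degree_power_le)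
  also have "\<dots> \<le> k" by simp
  finally show ?thesis .
qed

lemma coeff_L1_pow:
  fixes E K :: "'a::field" and r :: nat
  assumes "r > 0"
  shows "coeff ((monom E r + [:K:]) ^ l) j \<noteq> 0 \<Longrightarrow> r dvd j \<and> j \<le> r * l"
proof (induction l arbitrary: j)
  case 0 then show ?case by (auto split: if_splits)
next
  case (Suc l)
  from Suc.prems have "coeff ((monom E r + [:K:]) * (monom E r + [:K:]) ^ l) j \<noteq> 0" by simp
  then obtain i where i: "i \<le> j" "coeff (monom E r + [:K:]) i \<noteq> 0"
    "coeff ((monom E r + [:K:]) ^ l) (j - i) \<noteq> 0" using coeff_mult_nz by blast
  from i(2) have "i = 0 \<or> i = r" by (auto simp: coeff_monom coeff_pCons split: if_splits nat.splits)
  moreover have "r dvd (j - i) \<and> j - i \<le> r * l" using Suc.IH[OF i(3)] .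
  ultimately have ri: "r dvd i" "i \<le> r" by auto
  have j: "j = i + (j - i)" using i(1) by simp
  have "r dvd j" by (subst j) (intro dvd_add ri(1) \<open>r dvd (j - i) \<and> j - i \<le> r * l\<close>[THEN conjunct1])
  moreover have "j \<le> r * Suc l" using j ri(2) \<open>r dvd (j - i) \<and> j - i \<le> r * l\<close> by simp
  ultimately show ?case ..
qed

lemma coeff_LL:
  fixes E K C e :: "'a::field" and r :: nat
  assumes "r > 0" "coeff ([:C, e:] ^ k * (monom E r + [:K:]) ^ l) i \<noteq> 0"
  shows "\<exists>a b. i = a + r * b \<and> a \<le> k \<and> b \<le> l"
proof -
  obtain a where a: "a \<le> i" "coeff ([:C, e:] ^ k) a \<noteq> 0" "coeff ((monom E r + [:K:]) ^ l) (i - a) \<noteq> 0"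
    using coeff_mult_nz[OF assms(2)] by blast
  have h: "r dvd (i - a) \<and> i - a \<le> r*l" by (rule coeff_L1_pow[OF assms(1) a(3)])
  then obtain b where b1: "i - a = r*b" by (auto elim!: dvdE)
  with h have b: "i - a = r * b" "r * b \<le> r * l" by auto
  have "b \<le> l" using b(2) assms(1) by simp
  then show ?thesis using a(1) b(1) coeff_lin_pow[OF a(2)] by (intro exI[of _ a] exI[of _ b]) auto
qed

lemma arith_window:
  fixes r m k l a b n :: nat
  assumes rm: "r = 2*m+1" and m1: "m \<ge> 1" and "k \<le> m+1" "l \<le> m" "a \<le> k" "b \<le> l"
    and n: "n = (r+1)*(2*m+1-(k+l)) + a + r*b"
  shows "\<not> (r*r - r < n \<and> n < r*r - m - 1)" and "n = r*r - r \<Longrightarrow> k = 2 \<and> l = 0 \<and> a = 2 \<and> b = 0"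
proof -
  define s where "s = k + l"
  have "s \<le> r" "b \<le> s" "a \<le> s" using assms unfolding s_def by auto
  obtain t where t: "r = s + t" using \<open>s \<le> r\<close> by (metis le_add_diff_inverse)
  obtain U where U: "s = b + U" using \<open>b \<le> s\<close> by (metis le_add_diff_inverse)
  obtain V where V: "s = a + V" using \<open>a \<le> s\<close> by (metis le_add_diff_inverse)
  have "2*m+1-(k+l) = t" using t rm unfolding s_def by simp
  then have n': "n = (r+1)*t + a + r*b" using n by simp
  have key: "n + r*U + V = r*r + r"
  proof -
    have "n + r*U + V = (r+1)*t + r*(b+U) + (a+V)" using n' by (simp add: algebra_simps)
    also have "\<dots> = (r+1)*t + r*s + s" using U V by simp
    also have "\<dots> = (r+1)*(s+t)" by (simp add: algebra_simps)
    finally show ?thesis using t by (simp add: algebra_simps)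
  qed
  have rr: "r*r \<ge> r" by simp
  consider "U = 0" | "U = 1" | "U = 2" | "U \<ge> 3" by linarith
  then have "(\<not> (r*r - r < n \<and> n < r*r - m - 1)) \<and> (n = r*r - r \<longrightarrow> k = 2 \<and> l = 0 \<and> a = 2 \<and> b = 0)"
  proof cases
    case 1
    then have "k = 0" "a = 0" "V \<le> m" using U V assms unfolding s_def by auto
    moreover have "n + V = r*r + r" using key 1 by simp
    ultimately show ?thesis using rr rm by linarith
  next
    case 2
    then have "V \<le> m + 1" using U V assms unfolding s_def by auto
    moreover have "n + V = r*r" using key 2 by simp
    ultimately have "\<not> (r*r - r < n \<and> n < r*r - m - 1)" "n \<noteq> r*r - r" using rr rm m1 by linarith+
    then show ?thesis by blast
  next
    case 3
    then have "n + r*2 + V = r*r + r" using key by simp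
    then have "n + V = r*r - r" using rr by linarith
    moreover have "V = 0 \<Longrightarrow> k = 2 \<and> l = 0 \<and> a = 2 \<and> b = 0" using U V assms 3 unfolding s_def by auto
    ultimately show ?thesis by auto
  next
    case 4
    then have "r*U \<ge> r*3" by (intro mult_le_mono2)
    then show ?thesis using key rr rm by linarith
  qed
  then show "\<not> (r*r - r < n \<and> n < r*r - m - 1)" and "n = r*r - r \<Longrightarrow> k = 2 \<and> l = 0 \<and> a = 2 \<and> b = 0"
    by auto
qed


lemma term_rearrange:
  fixes L1 L2 :: "'a::field poly"
  shows "(of_nat x * L1^l * monom \<alpha> n1) * (of_nat y * L2^k * monom \<beta> n2)
      = monom (of_nat x * of_nat y * \<alpha> * \<beta>) (n1 + n2) * (L2^k * L1^l)"
proof -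
  have "monom (of_nat x * of_nat y * \<alpha> * \<beta>) (n1 + n2) = of_nat x * of_nat y * monom \<alpha> n1 * monom \<beta> n2"
    by (simp add: mult_monom of_nat_poly monom_0[symmetric])
  then show ?thesis by (simp add: mult_ac)
qed

lemma coeff_H0:
  fixes A e C :: "'a::field" and r m :: nat
  assumes rm: "r = 2*m+1" and m1: "m \<ge> 1" and A: "A \<noteq> 0" and e: "e \<noteq> 0"
    and bin: "of_nat ((m+1) choose 2) \<noteq> (0::'a)"
  shows "\<And>n. r*r - r < n \<Longrightarrow> n < r*r - m - 1 \<Longrightarrow>
      coeff (((monom (e^r) r + [:C^r:]) + monom (A^r) (r+1))^m * ([:C, e:] + monom A (r+1))^(m+1)) n = 0"
    and "coeff (((monom (e^r) r + [:C^r:]) + monom (A^r) (r+1))^m * ([:C, e:] + monom A (r+1))^(m+1)) (r*r - r) \<noteq> 0"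
proof -
  define L1 where "L1 = monom (e^r) r + [:C^r:]"
  define L2 where "L2 = [:C, e:]"
  define c where "c l k = of_nat (m choose l) * of_nat ((m+1) choose k) * (A^r)^(m-l) * A^(m+1-k)" for l k
  define T where "T l k = monom (c l k) ((r+1)*(2*m+1-(k+l))) * (L2^k * L1^l)" for l k
  have r0: "r > 0" using rm by simp
  have expand: "(L1 + monom (A^r) (r+1))^m * (L2 + monom A (r+1))^(m+1) = (\<Sum>l\<le>m. \<Sum>k\<le>m+1. T l k)"
  proof -
    have "(L1 + monom (A^r) (r+1))^m * (L2 + monom A (r+1))^(m+1)
       = (\<Sum>l\<le>m. of_nat (m choose l) * L1^l * monom (A^r) (r+1) ^ (m-l)) * (\<Sum>k\<le>m+1. of_nat ((m+1) choose k) * L2^k * monom A (r+1) ^ (m+1-k))"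
      by (simp only: binomial_ring)
    also have "\<dots> = (\<Sum>l\<le>m. \<Sum>k\<le>m+1. (of_nat (m choose l) * L1^l * monom (A^r) (r+1) ^ (m-l)) * (of_nat ((m+1) choose k) * L2^k * monom A (r+1) ^ (m+1-k)))"
      by (rule sum_product)
    also have "\<dots> = (\<Sum>l\<le>m. \<Sum>k\<le>m+1. T l k)"
    proof (intro sum.cong refl)
      fix l k assume l: "l \<in> {..m}" and k: "k \<in> {..m+1}"
      have "(m-l) + (m+1-k) = 2*m+1-(k+l)" using l k by auto
      then have N: "(r+1)*(m-l) + (r+1)*(m+1-k) = (r+1)*(2*m+1-(k+l))"
        by (metis add_mult_distrib2)
      show "(of_nat (m choose l) * L1^l * monom (A^r) (r+1) ^ (m-l)) * (of_nat ((m+1) choose k) * L2^k * monom A (r+1) ^ (m+1-k)) = T l k"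
        unfolding monom_power term_rearrange T_def c_def N[symmetric]
        by (simp add: mult.commute)
    qed
    finally show ?thesis .
  qed
  have cT: "coeff (T l k) n = (if n < (r+1)*(2*m+1-(k+l)) then 0 else c l k * coeff (L2^k * L1^l) (n - (r+1)*(2*m+1-(k+l))))" for l k n
    unfolding T_def by (rule coeff_monom_mult)
  have zero: "coeff (T l k) n = 0"
    if lk: "l \<le> m" "k \<le> m+1" and win: "(r*r - r < n \<and> n < r*r - m - 1) \<or> (n = r*r - r \<and> \<not> (k = 2 \<and> l = 0))" for l k n
  proof (rule ccontr)
    assume nz: "coeff (T l k) n \<noteq> 0"
    let ?N = "(r+1)*(2*m+1-(k+l))"
    from nz have ge: "\<not> n < ?N" and nz2: "coeff (L2^k * L1^l) (n - ?N) \<noteq> 0" unfolding cT by (auto split: if_splits)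
    from coeff_LL[OF r0 nz2[unfolded L1_def L2_def]] obtain a b where ab: "n - ?N = a + r * b" "a \<le> k" "b \<le> l" by blast
    have "n = ?N + a + r * b" using ab ge by simp
    from arith_window[OF rm m1 lk(2) lk(1) ab(2) ab(3) this] win show False by blast
  qed
  have H0eq: "((monom (e^r) r + [:C^r:]) + monom (A^r) (r+1))^m * ([:C, e:] + monom A (r+1))^(m+1) = (\<Sum>l\<le>m. \<Sum>k\<le>m+1. T l k)"
    using expand unfolding L1_def L2_def .
  show "coeff (((monom (e^r) r + [:C^r:]) + monom (A^r) (r+1))^m * ([:C, e:] + monom A (r+1))^(m+1)) n = 0"
    if "r*r - r < n" "n < r*r - m - 1" for n
    unfolding H0eq coeff_sum using zero that by (intro sum.neutral ballI) auto
  let ?n0 = "r*r - r"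
  have "coeff (((monom (e^r) r + [:C^r:]) + monom (A^r) (r+1))^m * ([:C, e:] + monom A (r+1))^(m+1)) ?n0
      = (\<Sum>l\<le>m. \<Sum>k\<le>m+1. coeff (T l k) ?n0)"
    unfolding H0eq coeff_sum ..
  also have "\<dots> = (\<Sum>l\<le>m. if l = 0 then coeff (T 0 2) ?n0 else 0)"
  proof (intro sum.cong refl)
    fix l assume l: "l \<in> {..m}"
    show "(\<Sum>k\<le>m+1. coeff (T l k) ?n0) = (if l = 0 then coeff (T 0 2) ?n0 else 0)"
    proof (cases "l = 0")
      case True
      have "(\<Sum>k\<le>m+1. coeff (T l k) ?n0) = (\<Sum>k\<le>m+1. if k = 2 then coeff (T 0 2) ?n0 else 0)"
        using zero[of l] l True by (intro sum.cong refl) auto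
      also have "\<dots> = coeff (T 0 2) ?n0" using m1 by (simp add: sum.delta)
      finally show ?thesis using True by simp
    next
      case False
      then show ?thesis using zero[of l] l by (simp add: sum.neutral)
    qed
  qed
  also have "\<dots> = coeff (T 0 2) ?n0" by (simp add: sum.delta)
  also have "\<dots> = c 0 2 * coeff (L2^2) 2"
  proof -
    have "?n0 = (r+1)*(2*m+1-(2+0)) + 2" using m1 rm by (cases m) (simp_all add: algebra_simps)
    then show ?thesis unfolding cT by simp
  qed
  also have "coeff (L2^2) 2 = e^2"
  proof -
    have "degree L2 = 1" using e by (simp add: L2_def)
    then have "degree (L2^2) = 2" using e by (simp add: degree_power_eq L2_def)
    then have "coeff (L2^2) 2 = lead_coeff (L2^2)" by simp
    also have "\<dots> = e^2" by (simp add: lead_coeff_power L2_def e)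
    finally show ?thesis .
  qed
  finally show "coeff (((monom (e^r) r + [:C^r:]) + monom (A^r) (r+1))^m * ([:C, e:] + monom A (r+1))^(m+1)) ?n0 \<noteq> 0"
    using A e bin by (simp add: c_def)
qed


theorem lemma2:
  fixes a b c d :: "'a :: {field, finite}"
    and r :: nat
    and D :: "'a set"
  assumes prime_power: "\<exists>p k. prime p \<and> k > 0 \<and> CARD('a) = p ^ k"
    and odd_q: "odd (CARD('a))"
    and square_q: "CARD('a) = r ^ 2"
    and q_gt: "CARD('a) > 9"
    and a_nz: "a \<noteq> 0"
    and D_card: "real (card D) > real (CARD('a)) - real r / 2 + 1 / 2"
    and D_sq: "\<forall>x\<in>D. \<exists>y. a * x ^ (r + 1) + d * x ^ r + b * x + c = y ^ 2"
  shows "a ^ r * b = d ^ r * a"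
proof (rule ccontr)
  assume neq: "a ^ r * b \<noteq> d ^ r * a"
  define q where "q = CARD('a)"
  obtain p k where pk: "prime p" "k > 0" "q = p ^ k" using prime_power unfolding q_def by blast
  have qrr: "q = r * r" using square_q unfolding q_def by (simp add: power2_eq_square)
  have charp: "CHAR('a) = p"
  proof -
    have "CHAR('a) dvd p ^ k" using CHAR_dvd_CARD[where 'a='a] pk unfolding q_def by simp
    then have "CHAR('a) dvd p" using prime_dvd_power ff_prime_CHAR by blast
    then show ?thesis using primes_dvd_imp_eq ff_prime_CHAR pk(1) by blast
  qed
  obtain j where rj: "r = CHAR('a) ^ j"
  proof -
    have "r dvd p ^ k" using qrr pk by (metis dvd_triv_left)
    then obtain i where "i \<le> k" "r = p ^ i" using divides_primepow_nat[OF pk(1)] by blast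
    then show ?thesis using that charp by blast
  qed
  have frob: "(x + y) ^ r = x ^ r + y ^ r" for x y :: 'a
    by (rule freshmans_dream'[OF ff_prime_CHAR rj])
  have oddr: "odd r" using odd_q qrr unfolding q_def by simp
  have r5: "r \<ge> 5"
  proof -
    have "r > 3"
    proof (rule ccontr)
      assume "\<not> r > 3"
      then have "r * r \<le> 3 * 3" by (intro mult_le_mono) auto
      then show False using q_gt qrr unfolding q_def by simp
    qed
    then show ?thesis using oddr by presburger
  qed
  define m where "m = (r - 1) div 2"
  have rm: "r = 2*m+1" using oddr unfolding m_def by presburger
  have m2: "m \<ge> 2" using r5 rm by linarith
  have fermat: "x ^ q = x" for x :: 'a unfolding q_def by (rule ff_power_card)
  define t where "t = - d / a"
  define ell where "ell x = a * x ^ (r + 1) + d * x ^ r + b * x + c" for x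
  define e where "e = a * t ^ r + b"
  define C where "C = ell t"
  have at: "a * t + d = 0" using a_nz unfolding t_def by simp
  have e0: "e \<noteq> 0"
  proof
    assume "e = 0"
    have "e * a ^ r = a * (a * t) ^ r + a ^ r * b" unfolding e_def by (simp add: algebra_simps power_mult_distrib)
    also have "a * t = - d" using at by (simp only: eq_neg_iff_add_eq_0)
    finally have "0 = - (a * d ^ r) + a ^ r * b" using \<open>e = 0\<close> oddr by simp
    then show False using neq by (simp add: algebra_simps)
  qed
  define F2 where "F2 = [:C, e:] + monom a (r+1)"
  define F1 where "F1 = (monom (e^r) r + [:C^r:]) + monom (a^r) (r+1)"
  have polyF2: "poly F2 x = ell (x + t)" for x
  proof -
    have "ell (x + t) - (C + e * x + a * x ^ (r+1)) = x ^ r * (a * t + d)"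
      unfolding ell_def C_def e_def by (simp add: frob algebra_simps power_Suc)
    then have "ell (x + t) = C + e * x + a * x ^ (r+1)" using at by simp
    then show ?thesis unfolding F2_def by (simp add: poly_monom algebra_simps)
  qed
  have polyF1: "poly F1 x = (poly F2 x) ^ r" for x
  proof -
    have "(poly F2 x) ^ r = (C + e * x + a * x ^ (r+1)) ^ r" unfolding F2_def by (simp add: poly_monom algebra_simps)
    also have "\<dots> = (C + e * x) ^ r + (a * x ^ (r+1)) ^ r" by (rule frob)
    also have "(C + e * x) ^ r = C ^ r + (e * x) ^ r" by (rule frob)
    also have "(a * x ^ (r+1)) ^ r = a ^ r * x ^ ((r+1) * r)" by (simp only: power_mult_distrib power_mult)
    also have "(e * x) ^ r = e ^ r * x ^ r" by (rule power_mult_distrib)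
    also have "x ^ ((r+1) * r) = x ^ (r+1)"
    proof -
      have "x ^ ((r+1) * r) = x ^ q * x ^ r" using qrr by (simp add: algebra_simps power_add)
      then show ?thesis using fermat by simp
    qed
    finally show ?thesis unfolding F1_def by (simp add: poly_monom algebra_simps)
  qed
  define H where "H = F1 ^ m * F2 ^ (m+1) - F2"
  define D' where "D' = (\<lambda>x. x - t) ` D"
  have Hzero: "poly H x = 0" if "x \<in> D'" for x
  proof -
    have "x + t \<in> D" using that unfolding D'_def by auto
    then obtain y where y: "ell (x + t) = y ^ 2" using D_sq unfolding ell_def by blast
    have ex: "2 * (r * m + (m + 1)) = q + 1" using qrr rm by (simp add: algebra_simps)
    have "poly H x = ((ell (x + t)) ^ r) ^ m * (ell (x + t)) ^ (m + 1) - ell (x + t)"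
      unfolding H_def by (simp add: polyF1 polyF2)
    also have "((ell (x + t)) ^ r) ^ m * (ell (x + t)) ^ (m + 1) = (ell (x + t)) ^ (r * m + (m + 1))"
      by (simp only: power_mult power_add)
    finally have "poly H x = (y^2) ^ (r * m + (m + 1)) - y ^ 2" using y by simp
    also have "(y^2) ^ (r * m + (m + 1)) = y ^ (2 * (r * m + (m + 1)))"
      by (simp only: power_mult)
    also have "\<dots> = y ^ q * y" unfolding ex by simp
    finally show ?thesis using fermat by (simp add: power2_eq_square)
  qed
  have r55': "r * r \<ge> 5 * r" using r5 by simp
  have card_D': "card D' = card D" unfolding D'_def by (rule card_image) (auto simp: inj_on_def)
  define W where "W = UNIV - D'"
  define w where "w = card W"
  have cDq: "card D \<le> q" unfolding q_def by (rule card_mono) auto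
  have wq: "w = q - card D" unfolding w_def W_def q_def using card_D'
    by (simp add: card_Diff_subset)
  have "real r / 2 = real m + 1/2" using rm by simp
  then have "real (card D) > real q - real m" using D_card unfolding q_def by linarith
  moreover have "m \<le> q" using r55' rm qrr by linarith
  ultimately have "real (q - m) < real (card D)" by (simp add: of_nat_diff)
  then have "card D > q - m" by linarith
  then have wm: "w \<le> m - 1" using wq cDq by linarith
  define V where "V = (\<Prod>x\<in>W. [:-x, 1:])"
  have polyV: "poly V x = 0" if "x \<in> W" for x
    unfolding V_def poly_prod using that by (simp add: prod_zero_iff)
  have degV: "degree V = w"
    unfolding V_def w_def by (subst degree_prod_eq_sum_degree) auto
  have lcV: "coeff V w = 1"
    using lead_coeff_prod[of "\<lambda>x. [:-x, 1:]" W] degV unfolding V_def by simp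
  define H0 where "H0 = F1 ^ m * F2 ^ (m+1)"
  have degF1: "degree F1 \<le> r + 1" unfolding F1_def
    by (intro degree_add_le order.trans[OF degree_monom_le]) auto
  have degF2: "degree F2 \<le> r + 1" unfolding F2_def
    by (intro degree_add_le order.trans[OF degree_monom_le]) auto
  have degH0: "degree H0 \<le> q + r"
  proof -
    have "degree H0 \<le> degree (F1 ^ m) + degree (F2 ^ (m+1))" unfolding H0_def by (rule degree_mult_le)
    also have "\<dots> \<le> degree F1 * m + degree F2 * (m+1)" by (intro add_mono degree_power_le)
    also have "\<dots> \<le> (r+1) * m + (r+1) * (m+1)" by (intro add_mono mult_right_mono degF1 degF2) auto
    also have "\<dots> = q + r" using qrr rm by (simp add: algebra_simps)
    finally show ?thesis .
  qed
  have "degree F2 \<le> q + r" using degF2 r55' qrr r5 by linarith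
  then have degH: "degree H \<le> q + r"
    unfolding H_def H0_def[symmetric] using degH0 by (intro degree_diff_le) auto
  have r55: "r * r \<ge> 5 * r" using r5 by simp
  define P where "P = monom 1 (r - 1 - w) * (V * H)"
  have degP: "degree P < 2 * (CARD('a) - 1)"
  proof -
    have "degree P \<le> (r - 1 - w) + (w + (q + r))" unfolding P_def
      by (intro order.trans[OF degree_mult_le] add_mono order.trans[OF degree_monom_le] degH) (auto simp: degV)
    also have "\<dots> < 2 * (q - 1)" using wm rm r55 qrr by linarith
    finally show ?thesis unfolding q_def .
  qed
  have "(\<Sum>x\<in>UNIV. poly P x) = 0"
  proof (intro sum.neutral ballI)
    fix x :: 'a
    show "poly P x = 0"
    proof (cases "x \<in> D'")
      case True then show ?thesis unfolding P_def by (simp add: Hzero)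
    next
      case False then show ?thesis unfolding P_def by (simp add: polyV W_def)
    qed
  qed
  moreover have "(\<Sum>x\<in>UNIV. poly P x) = - coeff P (CARD('a) - 1)"
    by (rule ff_sum_poly[OF degP]) (use q_gt in simp)
  ultimately have cP: "coeff P (q - 1) = 0" unfolding q_def by simp
  define n1 where "n1 = q - r + w"
  have cP1: "coeff P (q - 1) = coeff (V * H) n1"
  proof -
    have "\<not> q - 1 < r - 1 - w" using r55 qrr by linarith
    moreover have "q - 1 - (r - 1 - w) = n1" unfolding n1_def using wm rm r55 qrr by linarith
    ultimately show ?thesis unfolding P_def coeff_monom_mult by simp
  qed
  have bin: "of_nat ((m+1) choose 2) \<noteq> (0::'a)"
  proof
    assume B: "of_nat ((m+1) choose 2) = (0::'a)"
    have ev: "even ((m+1)*m)" by simp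
    have "2 * ((m+1) choose 2) = (m+1)*m" unfolding choose_two using ev by simp
    then have "8 * ((m+1) choose 2) + 1 = q" using qrr rm by (simp add: algebra_simps)
    then have "(of_nat (8 * ((m+1) choose 2) + 1) :: 'a) = of_nat q" by simp
    then have "(8 * of_nat ((m+1) choose 2) + 1 :: 'a) = 0" using ff_of_nat_card[where 'a='a] unfolding q_def by (simp add: add.commute)
    then show False using B by simp
  qed
  have m1: "m \<ge> 1" using m2 by simp
  note cH0 = coeff_H0[OF rm m1 a_nz e0 bin, where C=C, folded F1_def F2_def H0_def qrr]
  have cF2: "coeff F2 n = 0" if "n > r + 1" for n using degF2 that by (intro coeff_eq_0) linarith
  have "coeff (V * H) n1 = (\<Sum>i\<le>n1. coeff V i * coeff H (n1 - i))" by (rule coeff_mult)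
  also have "\<dots> = (\<Sum>i\<le>n1. if i = w then coeff H (q - r) else 0)"
  proof (intro sum.cong refl)
    fix i assume i: "i \<in> {..n1}"
    consider "i < w" | "i = w" | "i > w" by linarith
    then show "coeff V i * coeff H (n1 - i) = (if i = w then coeff H (q - r) else 0)"
    proof cases
      case 1
      have win: "q - r < n1 - i" "n1 - i < q - m - 1" using 1 wm rm r55 qrr unfolding n1_def by linarith+
      have "coeff H (n1 - i) = coeff H0 (n1 - i) - coeff F2 (n1 - i)" unfolding H_def H0_def by simp
      moreover have "n1 - i > r + 1" using win r55 rm qrr by linarith
      ultimately have "coeff H (n1 - i) = coeff H0 (n1 - i) - 0" using cF2[of "n1 - i"] by simp
      also have "\<dots> = 0" using cH0(1)[OF win] by simp
      finally show ?thesis using 1 by simp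
    next
      case 2
      have "n1 - i = q - r" using 2 unfolding n1_def using r55 qrr by simp
      then show ?thesis using 2 lcV by simp
    next
      case 3
      then show ?thesis using degV by (simp add: coeff_eq_0)
    qed
  qed
  also have "\<dots> = coeff H (q - r)" using wm unfolding n1_def by (simp add: sum.delta)
  also have "\<dots> = coeff H0 (q - r)"
  proof -
    have "q - r > r + 1" using r55 rm qrr by linarith
    then show ?thesis unfolding H_def H0_def[symmetric] using cF2[of "q - r"] by simp
  qed
  finally have "coeff H0 (q - r) = 0" using cP cP1 by simp
  then show False using cH0(2) by simp
qed

end
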